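(* Let $\mu$ be a joint distribution of $(X,A,Y)$ with $X\in\mathcal X$, $A\in\mathcal A$ ($\mathcal A$ finite), $Y\in\mathbb R$, $\mathbb E[Y^2]<\infty$. Let $w_a=\Pr(A=a)$, let $f^*(x,a)=\mathbb E[Y\mid X=x,A=a]$ be the Bayes regressor, and let $r^*_a$ be the distribution of $f^*(X,A)$ conditioned on $A=a$. Then for every $\alpha\ge 0$, \[ \inf_{f:\ \Delta_{\mathrm{SP}}(f)\le\alpha}\ \mathit{ER}(f)\;=\;\inf_{\substack{q:\ \mathrm{supp}(q)\subseteq\mathbb R\\ \{q_a\}_{a\in\mathcal A}\subset B_{\mathrm{KS}}(q,\alpha/2)}}\ \sum_{a\in\mathcal A} w_a\, W_2^2(r^*_a,q_a), \] where the infimum on the left ranges over all (possibly randomized) attribute-aware regressors $f:\mathcal X\times\mathcal A\to\mathbb R$ (the paper states both sides as minima).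
   Context: A randomized regressor $f:\mathcal X\times\mathcal A\to\mathbb R$ is given by a Markov kernel $\mathcal K((x,a),\cdot)$: $\Pr(f(x,a)\in T)=\mathcal K((x,a),T)$, with the randomness of $f$ independent of $(X,A,Y)$. Excess risk: $\mathit{ER}(f)=\mathbb E[(f(X,A)-Y)^2]-\mathbb E[(f^*(X,A)-Y)^2]=\mathbb E[(f(X,A)-f^*(X,A))^2]$. Kolmogorov–Smirnov distance between probability measures $p,q$ on $\mathbb R$: $D_{\mathrm{KS}}(p,q)=\sup_{t\in\mathbb R}|p((-\infty,t])-q((-\infty,t])|$. Statistical parity gap: $\Delta_{\mathrm{SP}}(f)=\max_{a,a'\in\mathcal A}D_{\mathrm{KS}}(r_a,r_{a'})$, where $r_a$ is the distribution of $f(X,A)$ conditioned on $A=a$. $B_{\mathrm{KS}}(q,\rho)=\{p \text{ probability measure on }\mathbb R: D_{\mathrm{KS}}(p,q)\le\rho\}$. $W_2^2(p,q)=\inf_{\pi\in\Pi(p,q)}\int(y-y')^2\,d\pi(y,y')$, where $\Pi(p,q)$ is the set of couplings of $p$ and $q$. *)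

theory Defs
  imports "HOL-Probability.Probability"
begin

text \<open>Observations are triples (x, a, y) :: 'x \<times> 'a \<times> real; the joint law mu lives on
  MX \<otimes> count_space UNIV \<otimes> borel.  A randomized regressor is a Markov kernel
  K :: 'x \<times> 'a \<Rightarrow> real measure, i.e. K \<in> (MX \<otimes> count_space UNIV) \<rightarrow> prob_algebra borel.\<close>

definition grp_event :: "'a \<Rightarrow> ('x \<times> 'a \<times> real) set" where
  "grp_event a = {\<omega>. fst (snd \<omega>) = a}"

definition grp_weight :: "('x \<times> 'a \<times> real) measure \<Rightarrow> 'a \<Rightarrow> real" where
  "grp_weight mu a = measure mu (grp_event a)"

definition is_bayes_regressor ::
  "'x measure \<Rightarrow> ('x \<times> 'a \<times> real) measure \<Rightarrow> ('x \<times> 'a \<Rightarrow> real) \<Rightarrow> bool" where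
  "is_bayes_regressor MX mu fstar \<longleftrightarrow>
     fstar \<in> borel_measurable (MX \<Otimes>\<^sub>M count_space UNIV) \<and>
     integrable mu (\<lambda>\<omega>. fstar (fst \<omega>, fst (snd \<omega>))) \<and>
     (\<forall>S \<in> sets (MX \<Otimes>\<^sub>M count_space UNIV).
        (\<integral>\<omega>. indicator S (fst \<omega>, fst (snd \<omega>)) * snd (snd \<omega>) \<partial>mu)
      = (\<integral>\<omega>. indicator S (fst \<omega>, fst (snd \<omega>)) * fstar (fst \<omega>, fst (snd \<omega>)) \<partial>mu))"

definition cond_out_dist ::
  "('x \<times> 'a \<times> real) measure \<Rightarrow> ('x \<times> 'a \<Rightarrow> real measure) \<Rightarrow> 'a \<Rightarrow> real measure" where
  "cond_out_dist mu K a = bind (uniform_measure mu (grp_event a)) (\<lambda>\<omega>. K (fst \<omega>, fst (snd \<omega>)))"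

definition cond_bayes_dist ::
  "('x \<times> 'a \<times> real) measure \<Rightarrow> ('x \<times> 'a \<Rightarrow> real) \<Rightarrow> 'a \<Rightarrow> real measure" where
  "cond_bayes_dist mu fstar a =
     distr (uniform_measure mu (grp_event a)) borel (\<lambda>\<omega>. fstar (fst \<omega>, fst (snd \<omega>)))"

definition excess_risk ::
  "('x \<times> 'a \<times> real) measure \<Rightarrow> ('x \<times> 'a \<Rightarrow> real) \<Rightarrow> ('x \<times> 'a \<Rightarrow> real measure) \<Rightarrow> ennreal" where
  "excess_risk mu fstar K =
     (\<integral>\<^sup>+\<omega>. (\<integral>\<^sup>+t. ennreal ((t - fstar (fst \<omega>, fst (snd \<omega>)))\<^sup>2) \<partial>K (fst \<omega>, fst (snd \<omega>))) \<partial>mu)"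

definition D_KS :: "real measure \<Rightarrow> real measure \<Rightarrow> real" where
  "D_KS p q = (SUP t. \<bar>measure p {..t} - measure q {..t}\<bar>)"

definition sp_gap ::
  "('x \<times> 'a::finite \<times> real) measure \<Rightarrow> ('x \<times> 'a \<Rightarrow> real measure) \<Rightarrow> real" where
  "sp_gap mu K = Max ((\<lambda>(a, a'). D_KS (cond_out_dist mu K a) (cond_out_dist mu K a')) ` UNIV)"

definition prob_measures_R :: "real measure set" where
  "prob_measures_R = {p. prob_space p \<and> sets p = sets borel}"

definition couplings :: "real measure \<Rightarrow> real measure \<Rightarrow> (real \<times> real) measure set" where
  "couplings p q = {\<pi>. prob_space \<pi> \<and> sets \<pi> = sets (borel \<Otimes>\<^sub>M borel) \<and>
                       distr \<pi> borel fst = p \<and> distr \<pi> borel snd = q}"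

definition W2sq :: "real measure \<Rightarrow> real measure \<Rightarrow> ennreal" where
  "W2sq p q = (INF \<pi> \<in> couplings p q. \<integral>\<^sup>+z. ennreal ((fst z - snd z)\<^sup>2) \<partial>\<pi>)"

end

theory Submission
  imports Defs
begin

lemma D_KS_le:
  assumes "\<And>t. \<bar>measure p {..t} - measure q {..t}\<bar> \<le> c"
  shows "D_KS p q \<le> c"
  unfolding D_KS_def by (rule cSUP_least) (auto simp: assms)

lemma D_KS_ge:
  assumes "prob_space p" "prob_space q"
  shows "\<bar>measure p {..t} - measure q {..t}\<bar> \<le> D_KS p q"
proof -
  have "bdd_above (range (\<lambda>t. \<bar>measure p {..t} - measure q {..t}\<bar>))"
  proof (rule bdd_aboveI)
    fix x assume "x \<in> range (\<lambda>t. \<bar>measure p {..t} - measure q {..t}\<bar>)"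
    then obtain s where "x = \<bar>measure p {..s} - measure q {..s}\<bar>" by auto
    moreover have "measure p {..s} \<le> 1" "measure q {..s} \<le> 1"
      using assms by (auto intro: prob_space.prob_le_1)
    ultimately show "x \<le> 1" by (simp add: abs_le_iff measure_nonneg) (smt (verit) measure_nonneg)
  qed
  then show ?thesis unfolding D_KS_def by (rule cSUP_upper[OF UNIV_I])
qed

lemma D_KS_sym: "D_KS p q = D_KS q p"
  unfolding D_KS_def by (simp add: abs_minus_commute)

lemma D_KS_triangle:
  assumes "prob_space p" "prob_space q" "prob_space r"
  shows "D_KS p r \<le> D_KS p q + D_KS q r"
proof (rule D_KS_le)
  fix t
  have "\<bar>measure p {..t} - measure r {..t}\<bar> \<le> \<bar>measure p {..t} - measure q {..t}\<bar> + \<bar>measure q {..t} - measure r {..t}\<bar>"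
    by linarith
  also have "\<dots> \<le> D_KS p q + D_KS q r"
    using D_KS_ge[OF assms(1,2)] D_KS_ge[OF assms(2,3)] by (intro add_mono)
  finally show "\<bar>measure p {..t} - measure r {..t}\<bar> \<le> D_KS p q + D_KS q r" .
qed

lemma tendsto_Max_finite:
  fixes f :: "'i \<Rightarrow> 'b \<Rightarrow> real"
  assumes "finite S" "S \<noteq> {}" "\<And>a. a \<in> S \<Longrightarrow> (f a \<longlongrightarrow> l a) F"
  shows "((\<lambda>x. Max ((\<lambda>a. f a x) ` S)) \<longlongrightarrow> Max (l ` S)) F"
  using assms
proof (induction S rule: finite_ne_induct)
  case (singleton x) then show ?case by simp
next
  case (insert x S)
  have "((\<lambda>y. max (f x y) (Max ((\<lambda>a. f a y) ` S))) \<longlongrightarrow> max (l x) (Max (l ` S))) F"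
    using insert by (intro tendsto_max) auto
  then show ?case using insert by simp
qed

lemma tendsto_Min_finite:
  fixes f :: "'i \<Rightarrow> 'b \<Rightarrow> real"
  assumes "finite S" "S \<noteq> {}" "\<And>a. a \<in> S \<Longrightarrow> (f a \<longlongrightarrow> l a) F"
  shows "((\<lambda>x. Min ((\<lambda>a. f a x) ` S)) \<longlongrightarrow> Min (l ` S)) F"
  using assms
proof (induction S rule: finite_ne_induct)
  case (singleton x) then show ?case by simp
next
  case (insert x S)
  have "((\<lambda>y. min (f x y) (Min ((\<lambda>a. f a y) ` S))) \<longlongrightarrow> min (l x) (Min (l ` S))) F"
    using insert by (intro tendsto_min) auto
  then show ?case using insert by simp
qed

lemma mid_aux: assumes "(x::real) \<le> u" "l \<le> x" "\<bar>u - l\<bar> \<le> al" shows "\<bar>x - (u + l) / 2\<bar> \<le> al / 2"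
proof -
  have "u - l \<le> al" using assms(3) by simp
  have a: "x - (u + l) / 2 \<le> al / 2" using assms(1,2) \<open>u - l \<le> al\<close> by (simp add: field_simps)
  have b: "-(x - (u + l) / 2) \<le> al / 2" using assms(1,2) \<open>u - l \<le> al\<close> by (simp add: field_simps)
  show ?thesis using a b by (simp only: abs_le_iff) 
qed


lemma midpoint_measure:
  fixes Q :: "'a::finite \<Rightarrow> real measure"
  assumes Q: "\<And>a. Q a \<in> prob_measures_R"
    and gap: "\<And>a b. D_KS (Q a) (Q b) \<le> alpha"
  shows "\<exists>q\<in>prob_measures_R. \<forall>a. D_KS (Q a) q \<le> alpha / 2"
proof -
  define F where "F a t = measure (Q a) {..t}" for a t
  define G where "G t = (Max (range (\<lambda>a. F a t)) + Min (range (\<lambda>a. F a t))) / 2" for t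
  have fbm: "finite_borel_measure (Q a)" for a
    using Q[of a] unfolding prob_measures_R_def
    by (auto intro!: finite_borel_measure.intro finite_borel_measure_axioms.intro prob_space.finite_measure)
  have ps: "prob_space (Q a)" for a using Q[of a] unfolding prob_measures_R_def by auto
  have Fcdf: "F a = cdf (Q a)" for a by (simp add: F_def fun_eq_iff cdf_def)
  have mono: "G x \<le> G y" if "x \<le> y" for x y
  proof -
    have 1: "F a x \<le> F a y" for a using finite_borel_measure.cdf_nondecreasing[OF fbm that] Fcdf by simp
    have 2: "F a y \<le> Max (range (\<lambda>a. F a y))" "Min (range (\<lambda>a. F a x)) \<le> F a x" for a
      by auto
    have 3: "F a x \<le> Max (range (\<lambda>a. F a y))" "Min (range (\<lambda>a. F a x)) \<le> F a y" for a
      using 1[of a] 2[of a] by linarith+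
    have "Max (range (\<lambda>a. F a x)) \<le> Max (range (\<lambda>a. F a y))"
              "Min (range (\<lambda>a. F a x)) \<le> Min (range (\<lambda>a. F a y))"
      using 3 by (auto simp: Max_le_iff Min_ge_iff)
    then show ?thesis unfolding G_def by (intro divide_right_mono add_mono) auto
  qed
  have rc: "continuous (at_right t) G" for t
  proof -
    have "(F a \<longlongrightarrow> F a t) (at_right t)" for a
      using finite_borel_measure.cdf_is_right_cont[OF fbm, of t] Fcdf[of a]
      by (simp add: continuous_within)
    then have "((\<lambda>x. Max ((\<lambda>a. F a x) ` UNIV)) \<longlongrightarrow> Max ((\<lambda>a. F a t) ` UNIV)) (at_right t)"
              "((\<lambda>x. Min ((\<lambda>a. F a x) ` UNIV)) \<longlongrightarrow> Min ((\<lambda>a. F a t) ` UNIV)) (at_right t)"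
      by (auto intro!: tendsto_Max_finite[where l="\<lambda>a. F a t"] tendsto_Min_finite[where l="\<lambda>a. F a t"])
    then have "(G \<longlongrightarrow> G t) (at_right t)"
      unfolding G_def by (intro tendsto_intros) auto
    then show ?thesis by (simp add: continuous_within)
  qed
  have bot: "(G \<longlongrightarrow> 0) at_bot"
  proof -
    have "(F a \<longlongrightarrow> 0) at_bot" for a
      using finite_borel_measure.cdf_lim_at_bot[OF fbm, of a] Fcdf[of a] by simp
    note lim = this
    have "((\<lambda>x. Max ((\<lambda>a. F a x) ` UNIV)) \<longlongrightarrow> Max ((\<lambda>a::'a. 0::real) ` UNIV)) at_bot"
      by (rule tendsto_Max_finite[where f=F]) (auto intro: lim)
    moreover have "((\<lambda>x. Min ((\<lambda>a. F a x) ` UNIV)) \<longlongrightarrow> Min ((\<lambda>a::'a. 0::real) ` UNIV)) at_bot"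
      by (rule tendsto_Min_finite[where f=F]) (auto intro: lim)
    ultimately have "(G \<longlongrightarrow> (Max ((\<lambda>a::'a. 0::real) ` UNIV) + Min ((\<lambda>a::'a. 0::real) ` UNIV)) / 2) at_bot"
      unfolding G_def by (intro tendsto_intros) auto
    then show ?thesis by simp
  qed
  have top: "(G \<longlongrightarrow> 1) at_top"
  proof -
    have "(F a \<longlongrightarrow> 1) at_top" for a
    proof -
      have "real_distribution (Q a)"
        using Q[of a] unfolding prob_measures_R_def
        by (auto intro!: real_distribution.intro real_distribution_axioms.intro)
      then show ?thesis using real_distribution.cdf_lim_at_top_prob Fcdf[of a] by metis
    qed
    note lim = this
    have "((\<lambda>x. Max ((\<lambda>a. F a x) ` UNIV)) \<longlongrightarrow> Max ((\<lambda>a::'a. 1::real) ` UNIV)) at_top"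
      by (rule tendsto_Max_finite[where f=F]) (auto intro: lim)
    moreover have "((\<lambda>x. Min ((\<lambda>a. F a x) ` UNIV)) \<longlongrightarrow> Min ((\<lambda>a::'a. 1::real) ` UNIV)) at_top"
      by (rule tendsto_Min_finite[where f=F]) (auto intro: lim)
    ultimately have "(G \<longlongrightarrow> (Max ((\<lambda>a::'a. 1::real) ` UNIV) + Min ((\<lambda>a::'a. 1::real) ` UNIV)) / 2) at_top"
      unfolding G_def by (intro tendsto_intros) auto
    then show ?thesis by simp
  qed
  define q where "q = interval_measure G"
  have rd: "real_distribution q"
    unfolding q_def by (rule real_distribution_interval_measure[OF mono rc bot top]) auto
  have qin: "q \<in> prob_measures_R"
    using rd unfolding prob_measures_R_def real_distribution_def real_distribution_axioms_def by auto
  have mq: "measure q {..t} = G t" for t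
    unfolding q_def by (rule measure_interval_measure_Iic[OF mono rc bot]) auto
  have "D_KS (Q a) q \<le> alpha / 2" for a
  proof (rule D_KS_le)
    fix t
    have "Max (range (\<lambda>a. F a t)) \<in> range (\<lambda>a. F a t)" by (rule Max_in) auto
    then obtain b where b: "F b t = Max (range (\<lambda>a. F a t))" by (metis rangeE)
    have "Min (range (\<lambda>a. F a t)) \<in> range (\<lambda>a. F a t)" by (rule Min_in) auto
    then obtain c where c: "F c t = Min (range (\<lambda>a. F a t))" by (metis rangeE)
    have "F a t \<le> F b t" "F c t \<le> F a t" using b c by auto
    moreover have "\<bar>F b t - F c t\<bar> \<le> alpha"
      using D_KS_ge[OF ps ps, of b t c] gap[of b c] by (simp add: F_def)
    ultimately show "\<bar>measure (Q a) {..t} - measure q {..t}\<bar> \<le> alpha / 2"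
      unfolding mq G_def b[symmetric] c[symmetric] F_def[symmetric] by (rule mid_aux)
  qed
  then show ?thesis using qin by blast
qed



definition cellJ :: "real \<Rightarrow> real \<Rightarrow> int" where "cellJ e t = \<lfloor>t / e\<rfloor>"
definition cellC :: "real \<Rightarrow> int \<Rightarrow> real set" where "cellC e j = {t. cellJ e t = j}"
definition condK :: "(real \<times> real) measure \<Rightarrow> real \<Rightarrow> int \<Rightarrow> real measure" where
  "condK P e j = (if emeasure P (cellC e j \<times> UNIV) = 0 then return borel 0
                  else distr (uniform_measure P (cellC e j \<times> UNIV)) borel snd)"

lemma cellJ_meas[measurable]: "cellJ e \<in> borel \<rightarrow>\<^sub>M count_space UNIV"
  unfolding cellJ_def by measurable

lemma cellC_sets[measurable]: "cellC e j \<in> sets borel"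
proof -
  have "cellC e j = cellJ e -` {j} \<inter> space borel" by (auto simp: cellC_def)
  then show ?thesis using measurable_sets[OF cellJ_meas, of "{j}"] by simp
qed

lemma cellJ_close:
  assumes "e > 0" "cellJ e t = cellJ e t'"
  shows "\<bar>t - t'\<bar> < e"
proof -
  have "of_int \<lfloor>t/e\<rfloor> \<le> t/e" "t/e < of_int \<lfloor>t/e\<rfloor> + 1"
       "of_int \<lfloor>t'/e\<rfloor> \<le> t'/e" "t'/e < of_int \<lfloor>t'/e\<rfloor> + 1"
    by linarith+
  with assms(2) have "\<bar>t/e - t'/e\<bar> < 1" unfolding cellJ_def by linarith
  then have "\<bar>t - t'\<bar> / e < 1" using assms(1) by (simp add: diff_divide_distrib[symmetric])
  then show ?thesis using assms(1) by (simp add: divide_less_eq)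
qed

lemma sq_split:
  fixes s t t' e :: real
  assumes "e > 0" "\<bar>t - t'\<bar> < e"
  shows "(s - t)\<^sup>2 \<le> (1 + e) * (t' - s)\<^sup>2 + (e + e\<^sup>2)"
proof -
  define u where "u = s - t'"
  define v where "v = t' - t"
  have "s - t = u + v" by (simp add: u_def v_def)
  have v2: "v\<^sup>2 \<le> e\<^sup>2"
  proof -
    have "\<bar>v\<bar> < e" using assms by (simp add: v_def abs_minus_commute)
    then have "\<bar>v\<bar>\<^sup>2 < e\<^sup>2" by (intro power_strict_mono) auto
    then show ?thesis by simp
  qed
  have "2 * u * v \<le> e * u\<^sup>2 + v\<^sup>2 / e"
  proof -
    have "0 \<le> (e * u - v)\<^sup>2 / e" using assms by simp
    also have "(e * u - v)\<^sup>2 / e = e * u\<^sup>2 - 2 * u * v + v\<^sup>2 / e"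
      using assms by (simp add: power2_eq_square field_simps)
    finally show ?thesis by simp
  qed
  moreover have "v\<^sup>2 / e \<le> e" using v2 assms by (simp add: divide_le_eq power2_eq_square)
  ultimately have "(s - t)\<^sup>2 \<le> (1 + e) * u\<^sup>2 + e + e\<^sup>2"
    using v2 \<open>s - t = u + v\<close> by (simp add: power2_eq_square algebra_simps)
  moreover have "u\<^sup>2 = (t' - s)\<^sup>2" by (simp add: u_def power2_commute)
  ultimately show ?thesis by simp
qed

locale cpl = prob_space P for P :: "(real \<times> real) measure" +
  assumes sets_P[measurable_cong]: "sets P = sets (borel \<Otimes>\<^sub>M borel)"
begin

lemma space_P[simp]: "space P = UNIV"
  using sets_eq_imp_space_eq[OF sets_P] by (simp add: space_pair_measure)

lemma emeasure_P_UNIV[simp]: "emeasure P UNIV = 1"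
  using emeasure_space_1 by simp

lemma cellC_UNIV_sets[measurable]: "cellC e j \<times> UNIV \<in> sets P"
  unfolding sets_P by (rule pair_measureI) auto

lemma condK_space: "condK P e j \<in> space (prob_algebra borel)"
proof (cases "emeasure P (cellC e j \<times> UNIV) = 0")
  case True then show ?thesis by (simp add: condK_def space_prob_algebra prob_space_return)
next
  case False
  have "prob_space (uniform_measure P (cellC e j \<times> UNIV))"
    using False by (intro prob_space_uniform_measure) auto
  then have "prob_space (distr (uniform_measure P (cellC e j \<times> UNIV)) borel snd)"
    by (rule prob_space.prob_space_distr) (simp add: measurable_cong_sets[OF sets_uniform_measure sets_P[THEN sym] ])
  then show ?thesis using False by (simp add: condK_def space_prob_algebra)
qed

lemma condK_meas[measurable]: "(\<lambda>t. condK P e (cellJ e t)) \<in> borel \<rightarrow>\<^sub>M prob_algebra borel"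
proof -
  have "condK P e \<in> count_space UNIV \<rightarrow>\<^sub>M prob_algebra borel"
    using condK_space by simp
  then show ?thesis by (rule measurable_compose[OF cellJ_meas])
qed

definition "r = distr P borel fst"

lemma r_cell: "emeasure r (cellC e j) = emeasure P (cellC e j \<times> UNIV)"
  unfolding r_def
  by (subst emeasure_distr) (auto intro: arg_cong[where f="emeasure P"])

lemma r_integral_cell:
  "(\<integral>\<^sup>+t. \<phi> (cellJ e t) \<partial>r) = (\<integral>\<^sup>+j. \<phi> j * emeasure P (cellC e j \<times> UNIV) \<partial>count_space UNIV)"
proof -
  have sr[measurable_cong]: "sets r = sets borel" by (simp add: r_def)
  have "(\<integral>\<^sup>+t. \<phi> (cellJ e t) \<partial>r) = (\<integral>\<^sup>+t. \<integral>\<^sup>+j. \<phi> j * indicator (cellC e j) t \<partial>count_space UNIV \<partial>r)"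
  proof (rule nn_integral_cong)
    fix t
    have "(\<lambda>j. \<phi> j * indicator (cellC e j) t) = (\<lambda>j. \<phi> j * indicator {cellJ e t} j)"
      by (auto simp: cellC_def split: split_indicator)
    then show "\<phi> (cellJ e t) = (\<integral>\<^sup>+j. \<phi> j * indicator (cellC e j) t \<partial>count_space UNIV)"
      by simp
  qed
  also have "\<dots> = (\<integral>\<^sup>+j. \<integral>\<^sup>+t. \<phi> j * indicator (cellC e j) t \<partial>r \<partial>count_space UNIV)"
    by (rule nn_integral_count_space_nn_integral) auto
  also have "\<dots> = (\<integral>\<^sup>+j. \<phi> j * emeasure P (cellC e j \<times> UNIV) \<partial>count_space UNIV)"
    by (rule nn_integral_cong) (simp add: nn_integral_cmult_indicator r_cell)
  finally show ?thesis .
qed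

lemma sets_r[measurable_cong]: "sets r = sets borel" by (simp add: r_def)

lemma condK_marg:
  assumes B[measurable]: "B \<in> sets borel"
  shows "(\<integral>\<^sup>+t. emeasure (condK P e (cellJ e t)) B \<partial>r) = emeasure P (UNIV \<times> B)"
proof -
  have "(\<integral>\<^sup>+t. emeasure (condK P e (cellJ e t)) B \<partial>r)
      = (\<integral>\<^sup>+j. emeasure (condK P e j) B * emeasure P (cellC e j \<times> UNIV) \<partial>count_space UNIV)"
    by (rule r_integral_cell)
  also have "\<dots> = (\<integral>\<^sup>+j. emeasure P (cellC e j \<times> B) \<partial>count_space UNIV)"
  proof (rule nn_integral_cong)
    fix j
    have CB: "cellC e j \<times> B \<in> sets P" unfolding sets_P by (rule pair_measureI) auto
    show "emeasure (condK P e j) B * emeasure P (cellC e j \<times> UNIV) = emeasure P (cellC e j \<times> B)"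
    proof (cases "emeasure P (cellC e j \<times> UNIV) = 0")
      case True
      have "emeasure P (cellC e j \<times> B) \<le> emeasure P (cellC e j \<times> UNIV)"
        by (rule emeasure_mono) auto
      then show ?thesis using True by simp
    next
      case False
      have fin: "emeasure P (cellC e j \<times> UNIV) \<noteq> \<infinity>" by simp
      have sm: "snd \<in> uniform_measure P (cellC e j \<times> UNIV) \<rightarrow>\<^sub>M borel"
        by (simp add: measurable_cong_sets[OF sets_uniform_measure sets_P[THEN sym]])
      have se: "snd -` B \<inter> space (uniform_measure P (cellC e j \<times> UNIV)) = UNIV \<times> B" by auto
      have "emeasure (condK P e j) B = emeasure (uniform_measure P (cellC e j \<times> UNIV)) (snd -` B \<inter> space (uniform_measure P (cellC e j \<times> UNIV)))"
        using False by (simp only: condK_def if_False emeasure_distr[OF sm B])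
      also have "\<dots> = emeasure (uniform_measure P (cellC e j \<times> UNIV)) (UNIV \<times> B)" by (simp only: se)
      also have "\<dots> = emeasure P (cellC e j \<times> B) / emeasure P (cellC e j \<times> UNIV)"
      proof -
        have UB: "UNIV \<times> B \<in> sets P" unfolding sets_P by (rule pair_measureI) auto
        have "(cellC e j \<times> UNIV) \<inter> (UNIV \<times> B) = cellC e j \<times> B" by auto
        then show ?thesis by (simp add: UB)
      qed
      moreover have "emeasure P (cellC e j \<times> UNIV) < top" by (simp add: less_top[symmetric])
      ultimately show ?thesis using False
        by (metis ennreal_divide_times ennreal_divide_self mult_1_right)
    qed
  qed
  also have "\<dots> = emeasure P (\<Union>j. cellC e j \<times> B)"
  proof (rule emeasure_UN_countable[symmetric])
    show "\<And>i. i \<in> UNIV \<Longrightarrow> cellC e i \<times> B \<in> sets P" unfolding sets_P by (rule pair_measureI) auto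
    show "disjoint_family_on (\<lambda>j. cellC e j \<times> B) UNIV"
      by (auto simp: disjoint_family_on_def cellC_def)
  qed auto
  also have "(\<Union>j. cellC e j \<times> B) = UNIV \<times> B" by (auto simp: cellC_def)
  finally show ?thesis .
qed

lemma condK_snd:
  "(\<integral>\<^sup>+t. emeasure (condK P e (cellJ e t)) B \<partial>r) = emeasure (distr P borel snd) B" if "B \<in> sets borel"
  using that by (simp add: condK_marg emeasure_distr vimage_def)
                (auto intro: arg_cong[where f="emeasure _"])

lemma condK_cost:
  assumes e: "e > 0"
  shows "(\<integral>\<^sup>+t. \<integral>\<^sup>+s. ennreal ((s - t)\<^sup>2) \<partial>condK P e (cellJ e t) \<partial>r)
      \<le> ennreal (1 + e) * (\<integral>\<^sup>+z. ennreal ((fst z - snd z)\<^sup>2) \<partial>P) + ennreal (e + e\<^sup>2)"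
proof -
  define c where "c z = ennreal ((1 + e) * (fst z - snd z)\<^sup>2 + (e + e\<^sup>2))" for z :: "real \<times> real"
  define p where "p j = emeasure P (cellC e j \<times> UNIV)" for j
  define V where "V j = (\<integral>\<^sup>+z. c z * indicator (cellC e j \<times> UNIV) z \<partial>P)" for j
  have c_meas[measurable]: "c \<in> borel_measurable P" unfolding c_def by measurable
  have a: "(\<integral>\<^sup>+s. ennreal ((s - t)\<^sup>2) \<partial>condK P e (cellJ e t)) \<le> V (cellJ e t) / p (cellJ e t)"
    if pt: "p (cellJ e t) \<noteq> 0" for t
  proof -
    define j where "j = cellJ e t"
    have sm: "snd \<in> uniform_measure P (cellC e j \<times> UNIV) \<rightarrow>\<^sub>M borel"
      by (simp add: measurable_cong_sets[OF sets_uniform_measure sets_P[THEN sym]])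
    have "(\<integral>\<^sup>+s. ennreal ((s - t)\<^sup>2) \<partial>condK P e j)
        = (\<integral>\<^sup>+z. ennreal ((snd z - t)\<^sup>2) \<partial>uniform_measure P (cellC e j \<times> UNIV))"
    proof -
      have "(\<integral>\<^sup>+s. ennreal ((s - t)\<^sup>2) \<partial>distr (uniform_measure P (cellC e j \<times> UNIV)) borel snd)
          = (\<integral>\<^sup>+z. ennreal ((snd z - t)\<^sup>2) \<partial>uniform_measure P (cellC e j \<times> UNIV))"
        by (rule nn_integral_distr[OF sm]) simp
      then show ?thesis using pt by (simp add: condK_def p_def j_def)
    qed
    also have "\<dots> = (\<integral>\<^sup>+z. ennreal ((snd z - t)\<^sup>2) * indicator (cellC e j \<times> UNIV) z \<partial>P) / p j"
      unfolding p_def by (rule nn_integral_uniform_measure) auto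
    also have "\<dots> \<le> V j / p j"
      unfolding V_def
    proof (intro divide_right_mono_ennreal nn_integral_mono)
      fix z :: "real \<times> real"
      show "ennreal ((snd z - t)\<^sup>2) * indicator (cellC e j \<times> UNIV) z \<le> c z * indicator (cellC e j \<times> UNIV) z"
      proof (cases "z \<in> cellC e j \<times> UNIV")
        case True
        then have "cellJ e t = cellJ e (fst z)" by (auto simp: cellC_def j_def)
        then have "\<bar>t - fst z\<bar> < e" by (rule cellJ_close[OF e])
        then have "(snd z - t)\<^sup>2 \<le> (1 + e) * (fst z - snd z)\<^sup>2 + (e + e\<^sup>2)"
          by (rule sq_split[OF e])
        then show ?thesis using True by (simp add: c_def ennreal_leI)
      qed simp
    qed
    finally show ?thesis by (simp add: j_def)
  qed
  have b: "AE t in r. p (cellJ e t) \<noteq> 0"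
  proof -
    have "AE t in r. \<forall>j. cellJ e t = j \<longrightarrow> p j \<noteq> 0"
      unfolding AE_all_countable
    proof
      fix j
      show "AE t in r. cellJ e t = j \<longrightarrow> p j \<noteq> 0"
      proof (cases "p j = 0")
        case True
        then have "cellC e j \<in> null_sets r"
          using r_cell[of e j] by (auto simp: p_def null_sets_def)
        then have "AE t in r. t \<notin> cellC e j" by (rule AE_not_in)
        then show ?thesis by eventually_elim (auto simp: cellC_def)
      qed simp
    qed
    then show ?thesis by eventually_elim blast
  qed
  have "(\<integral>\<^sup>+t. \<integral>\<^sup>+s. ennreal ((s - t)\<^sup>2) \<partial>condK P e (cellJ e t) \<partial>r)
      \<le> (\<integral>\<^sup>+t. V (cellJ e t) / p (cellJ e t) \<partial>r)"
  proof (rule nn_integral_mono_AE)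
    show "AE t in r. (\<integral>\<^sup>+s. ennreal ((s - t)\<^sup>2) \<partial>condK P e (cellJ e t)) \<le> V (cellJ e t) / p (cellJ e t)"
      using b by eventually_elim (rule a)
  qed
  also have "\<dots> = (\<integral>\<^sup>+j. V j / p j * p j \<partial>count_space UNIV)"
    unfolding p_def by (rule r_integral_cell)
  also have "\<dots> \<le> (\<integral>\<^sup>+j. V j \<partial>count_space UNIV)"
  proof (rule nn_integral_mono)
    fix j
    have lt: "p j < top" by (simp add: p_def less_top[symmetric])
    show "V j / p j * p j \<le> V j"
    proof (cases "p j = 0")
      case False
      then have "V j / p j * p j = V j"
        using lt by (metis ennreal_divide_times ennreal_divide_self mult_1_right)
      then show ?thesis by simp
    qed simp
  qed
  also have "\<dots> = (\<integral>\<^sup>+z. \<integral>\<^sup>+j. c z * indicator (cellC e j \<times> UNIV) z \<partial>count_space UNIV \<partial>P)"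
    unfolding V_def by (rule nn_integral_count_space_nn_integral[symmetric]) auto
  also have "\<dots> = (\<integral>\<^sup>+z. c z \<partial>P)"
  proof (rule nn_integral_cong)
    fix z :: "real \<times> real"
    have "(\<lambda>j. c z * indicator (cellC e j \<times> UNIV) z) = (\<lambda>j. c z * indicator {cellJ e (fst z)} j)"
      by (rule ext) (simp add: indicator_def cellC_def mem_Times_iff eq_commute)
    then show "(\<integral>\<^sup>+j. c z * indicator (cellC e j \<times> UNIV) z \<partial>count_space UNIV) = c z"
      by simp
  qed
  also have "\<dots> = ennreal (1 + e) * (\<integral>\<^sup>+z. ennreal ((fst z - snd z)\<^sup>2) \<partial>P) + ennreal (e + e\<^sup>2)"
  proof -
    have "(\<integral>\<^sup>+z. c z \<partial>P) = (\<integral>\<^sup>+z. ennreal (1 + e) * ennreal ((fst z - snd z)\<^sup>2) + ennreal (e + e\<^sup>2) \<partial>P)"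
      using e by (intro nn_integral_cong) (simp add: c_def ennreal_mult')
    also have "\<dots> = (\<integral>\<^sup>+z. ennreal (1 + e) * ennreal ((fst z - snd z)\<^sup>2) \<partial>P) + (\<integral>\<^sup>+z. ennreal (e + e\<^sup>2) \<partial>P)"
      by (rule nn_integral_add) auto
    also have "\<dots> = ennreal (1 + e) * (\<integral>\<^sup>+z. ennreal ((fst z - snd z)\<^sup>2) \<partial>P) + ennreal (e + e\<^sup>2)"
      by (simp add: nn_integral_cmult emeasure_space_1)
    finally show ?thesis .
  qed
  finally show ?thesis .
qed

end


lemma ennreal_cancel1: "b \<noteq> 0 \<Longrightarrow> b \<noteq> top \<Longrightarrow> b * (a / b) = (a::ennreal)"
  unfolding ennreal_times_divide by (subst mult.commute) (rule mult_divide_eq_ennreal)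

locale setting =
  fixes MX :: "'x measure" and mu :: "('x \<times> 'a::finite \<times> real) measure" and fstar :: "'x \<times> 'a \<Rightarrow> real"
  assumes ps_mu: "prob_space mu"
    and sets_mu[measurable_cong]: "sets mu = sets (MX \<Otimes>\<^sub>M (count_space UNIV \<Otimes>\<^sub>M borel))"
    and wpos: "\<forall>a. grp_weight mu a > 0"
    and fmeas[measurable]: "fstar \<in> borel_measurable (MX \<Otimes>\<^sub>M count_space UNIV)"
begin

interpretation mu: prob_space mu by (rule ps_mu)

lemma P_meas[measurable]: "(\<lambda>\<omega>. (fst \<omega>, fst (snd \<omega>))) \<in> mu \<rightarrow>\<^sub>M MX \<Otimes>\<^sub>M count_space UNIV"
  by measurable

lemma G_sets[measurable]: "grp_event a \<in> sets mu"
proof (rule ccontr)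
  assume "grp_event a \<notin> sets mu"
  then have "measure mu (grp_event a) = 0" by (rule measure_notin_sets)
  with wpos[rule_format, of a] show False by (simp add: grp_weight_def)
qed

lemma w_eq: "emeasure mu (grp_event a) = ennreal (grp_weight mu a)"
  unfolding grp_weight_def by (rule mu.emeasure_eq_measure)

definition U where "U a = uniform_measure mu (grp_event a)"

lemma sets_U[simp, measurable_cong]: "sets (U a) = sets mu" by (simp add: U_def)
lemma space_U[simp]: "space (U a) = space mu" by (simp add: U_def)

lemma U_prob: "prob_space (U a)"
  unfolding U_def using wpos[rule_format, of a]
  by (intro prob_space_uniform_measure) (auto simp: w_eq)

lemma U_prob_alg: "U a \<in> space (prob_algebra mu)"
  using U_prob by (simp add: space_prob_algebra)

lemma decomp:
  assumes h[measurable]: "h \<in> borel_measurable mu"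
  shows "(\<integral>\<^sup>+\<omega>. h \<omega> \<partial>mu) = (\<Sum>a\<in>UNIV. ennreal (grp_weight mu a) * (\<integral>\<^sup>+\<omega>. h \<omega> \<partial>U a))"
proof -
  have "(\<integral>\<^sup>+\<omega>. h \<omega> \<partial>mu) = (\<integral>\<^sup>+\<omega>. (\<Sum>a\<in>UNIV. h \<omega> * indicator (grp_event a) \<omega>) \<partial>mu)"
  proof (rule nn_integral_cong)
    fix \<omega> :: "'x \<times> 'a \<times> real"
    have "(\<Sum>a\<in>UNIV. h \<omega> * indicator (grp_event a) \<omega>) = (\<Sum>a\<in>UNIV. h \<omega> * indicator {fst (snd \<omega>)} a)"
      by (intro sum.cong) (auto simp: grp_event_def indicator_def)
    also have "\<dots> = h \<omega>" by (simp add: sum.delta)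
    finally show "h \<omega> = (\<Sum>a\<in>UNIV. h \<omega> * indicator (grp_event a) \<omega>)" by simp
  qed
  also have "\<dots> = (\<Sum>a\<in>UNIV. (\<integral>\<^sup>+\<omega>. h \<omega> * indicator (grp_event a) \<omega> \<partial>mu))"
    by (rule nn_integral_sum) auto
  also have "\<dots> = (\<Sum>a\<in>UNIV. ennreal (grp_weight mu a) * (\<integral>\<^sup>+\<omega>. h \<omega> \<partial>U a))"
  proof (rule sum.cong)
    fix a :: 'a
    have ne: "emeasure mu (grp_event a) \<noteq> 0" using wpos[rule_format, of a] by (simp add: w_eq ennreal_eq_0_iff)
    have lt: "emeasure mu (grp_event a) \<noteq> top" by simp
    have "ennreal (grp_weight mu a) * (\<integral>\<^sup>+\<omega>. h \<omega> \<partial>U a)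
        = emeasure mu (grp_event a) * ((\<integral>\<^sup>+\<omega>. h \<omega> * indicator (grp_event a) \<omega> \<partial>mu) / emeasure mu (grp_event a))"
      unfolding U_def w_eq[symmetric] by (subst nn_integral_uniform_measure) auto
    also have "\<dots> = (\<integral>\<^sup>+\<omega>. h \<omega> * indicator (grp_event a) \<omega> \<partial>mu)"
      using ne lt by (rule ennreal_cancel1)
    finally show "(\<integral>\<^sup>+\<omega>. h \<omega> * indicator (grp_event a) \<omega> \<partial>mu) = ennreal (grp_weight mu a) * (\<integral>\<^sup>+\<omega>. h \<omega> \<partial>U a)"
      by simp
  qed simp
  finally show ?thesis .
qed

lemma cond_bayes_U: "cond_bayes_dist mu fstar a = distr (U a) borel (\<lambda>\<omega>. fstar (fst \<omega>, fst (snd \<omega>)))"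
  by (simp add: cond_bayes_dist_def U_def)

lemma cond_out_U: "cond_out_dist mu K a = U a \<bind> (\<lambda>\<omega>. K (fst \<omega>, fst (snd \<omega>)))"
  by (simp add: cond_out_dist_def U_def)

definition KS where "KS = MX \<Otimes>\<^sub>M count_space UNIV \<rightarrow>\<^sub>M prob_algebra borel"

lemma Kp_meas:
  assumes "K \<in> KS"
  shows "(\<lambda>\<omega>. K (fst \<omega>, fst (snd \<omega>))) \<in> mu \<rightarrow>\<^sub>M prob_algebra borel"
  using assms unfolding KS_def by (intro measurable_compose[OF P_meas])

lemma cond_out_prob:
  assumes "K \<in> KS"
  shows "cond_out_dist mu K a \<in> prob_measures_R"
  unfolding cond_out_U prob_measures_R_def
  using prob_space_bind'[OF U_prob_alg Kp_meas[OF assms]] sets_bind'[OF U_prob_alg Kp_meas[OF assms]]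
  by auto

lemma excess_risk_meas:
  assumes "K \<in> KS"
  shows "(\<lambda>\<omega>. \<integral>\<^sup>+t. ennreal ((t - fstar (fst \<omega>, fst (snd \<omega>)))\<^sup>2) \<partial>K (fst \<omega>, fst (snd \<omega>))) \<in> borel_measurable mu"
proof (rule nn_integral_measurable_subprob_algebra2[where N=borel])
  show "(\<lambda>(\<omega>, t). ennreal ((t - fstar (fst \<omega>, fst (snd \<omega>)))\<^sup>2)) \<in> borel_measurable (mu \<Otimes>\<^sub>M borel)"
    by measurable
  show "(\<lambda>\<omega>. K (fst \<omega>, fst (snd \<omega>))) \<in> mu \<rightarrow>\<^sub>M subprob_algebra borel"
    using Kp_meas[OF assms] by (rule measurable_prob_algebraD)
qed

lemma lower_one:
  assumes K: "K \<in> KS"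
  shows "W2sq (cond_bayes_dist mu fstar a) (cond_out_dist mu K a)
       \<le> (\<integral>\<^sup>+\<omega>. \<integral>\<^sup>+t. ennreal ((t - fstar (fst \<omega>, fst (snd \<omega>)))\<^sup>2) \<partial>K (fst \<omega>, fst (snd \<omega>)) \<partial>U a)"
proof -
  define Kp where "Kp \<omega> = K (fst \<omega>, fst (snd \<omega>))" for \<omega> :: "'x \<times> 'a \<times> real"
  define fp where "fp \<omega> = fstar (fst \<omega>, fst (snd \<omega>))" for \<omega> :: "'x \<times> 'a \<times> real"
  have Kp_p[measurable]: "Kp \<in> U a \<rightarrow>\<^sub>M prob_algebra borel"
    using Kp_meas[OF K] unfolding Kp_def by (simp add: measurable_cong_sets[OF sets_U refl])
  have Kp_s[measurable]: "Kp \<in> U a \<rightarrow>\<^sub>M subprob_algebra borel"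
    using Kp_p by (rule measurable_prob_algebraD)
  have fp_m[measurable]: "fp \<in> borel_measurable (U a)" unfolding fp_def by measurable
  define N where "N \<omega> = distr (Kp \<omega>) (borel \<Otimes>\<^sub>M borel) (\<lambda>t. (fp \<omega>, t))" for \<omega>
  have N_m[measurable]: "N \<in> U a \<rightarrow>\<^sub>M subprob_algebra (borel \<Otimes>\<^sub>M borel)"
    unfolding N_def by (rule measurable_distr2[OF _ Kp_s]) measurable
  have Kp_space: "\<omega> \<in> space (U a) \<Longrightarrow> Kp \<omega> \<in> space (prob_algebra borel)" for \<omega>
    using measurable_space[OF Kp_p] by blast
  have Kp_ps: "\<omega> \<in> space (U a) \<Longrightarrow> prob_space (Kp \<omega>)" for \<omega>
    using Kp_space by (simp add: space_prob_algebra)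
  have Kp_sets: "\<omega> \<in> space (U a) \<Longrightarrow> sets (Kp \<omega>) = sets borel" for \<omega>
    using Kp_space by (simp add: space_prob_algebra)
  have ne: "space (U a) \<noteq> {}" using prob_space.not_empty[OF U_prob] .
  define pi where "pi = U a \<bind> N"
  have sets_pi: "sets pi = sets (borel \<Otimes>\<^sub>M borel)"
    unfolding pi_def by (rule sets_bind[OF _ ne]) (simp add: N_def)
  have ps_pi: "prob_space pi"
    unfolding pi_def
  proof (rule prob_space.prob_space_bind[OF U_prob _ N_m])
    show "AE \<omega> in U a. prob_space (N \<omega>)"
    proof (rule AE_I2)
      fix \<omega> assume w: "\<omega> \<in> space (U a)"
      have "(\<lambda>t. (fp \<omega>, t)) \<in> Kp \<omega> \<rightarrow>\<^sub>M borel \<Otimes>\<^sub>M borel"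
        using Kp_sets[OF w] by (simp add: measurable_cong_sets[of "Kp \<omega>" borel])
      then show "prob_space (N \<omega>)" unfolding N_def by (rule prob_space.prob_space_distr[OF Kp_ps[OF w]])
    qed
  qed
  have m1: "distr pi borel fst = cond_bayes_dist mu fstar a"
  proof -
    have "distr pi borel fst = U a \<bind> (\<lambda>\<omega>. distr (N \<omega>) borel fst)"
      unfolding pi_def by (rule distr_bind[OF N_m ne]) simp
    also have "\<dots> = U a \<bind> (\<lambda>\<omega>. return borel (fp \<omega>))"
    proof (rule bind_cong[OF refl])
      fix \<omega> assume w: "\<omega> \<in> space (U a)"
      have m: "(\<lambda>t. (fp \<omega>, t)) \<in> Kp \<omega> \<rightarrow>\<^sub>M borel \<Otimes>\<^sub>M borel"
        using Kp_sets[OF w] by (simp add: measurable_cong_sets[of "Kp \<omega>" borel])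
      have "distr (N \<omega>) borel fst = distr (Kp \<omega>) borel (\<lambda>t. fp \<omega>)"
        unfolding N_def by (subst distr_distr[OF _ m]) (auto simp: comp_def)
      also have "\<dots> = return borel (fp \<omega>)"
        by (rule prob_space.distr_const[OF Kp_ps[OF w]]) simp
      finally show "distr (N \<omega>) borel fst = return borel (fp \<omega>)" .
    qed
    also have "\<dots> = distr (U a) borel fp"
      by (rule bind_return_distr'[OF ne]) simp
    finally show ?thesis by (simp add: cond_bayes_U fp_def[abs_def])
  qed
  have m2: "distr pi borel snd = cond_out_dist mu K a"
  proof -
    have "distr pi borel snd = U a \<bind> (\<lambda>\<omega>. distr (N \<omega>) borel snd)"
      unfolding pi_def by (rule distr_bind[OF N_m ne]) simp
    also have "\<dots> = U a \<bind> Kp"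
    proof (rule bind_cong[OF refl])
      fix \<omega> assume w: "\<omega> \<in> space (U a)"
      have m: "(\<lambda>t. (fp \<omega>, t)) \<in> Kp \<omega> \<rightarrow>\<^sub>M borel \<Otimes>\<^sub>M borel"
        using Kp_sets[OF w] by (simp add: measurable_cong_sets[of "Kp \<omega>" borel])
      have "distr (N \<omega>) borel snd = distr (Kp \<omega>) borel (\<lambda>t. t)"
        unfolding N_def by (subst distr_distr[OF _ m]) (auto simp: comp_def)
      also have "\<dots> = Kp \<omega>"
        by (rule distr_id2) (simp add: Kp_sets[OF w])
      finally show "distr (N \<omega>) borel snd = Kp \<omega>" .
    qed
    finally show ?thesis by (simp add: cond_out_U Kp_def[abs_def])
  qed
  have cpl: "pi \<in> couplings (cond_bayes_dist mu fstar a) (cond_out_dist mu K a)"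
    unfolding couplings_def using ps_pi sets_pi m1 m2 by auto
  have cost: "(\<integral>\<^sup>+z. ennreal ((fst z - snd z)\<^sup>2) \<partial>pi)
      = (\<integral>\<^sup>+\<omega>. \<integral>\<^sup>+t. ennreal ((t - fstar (fst \<omega>, fst (snd \<omega>)))\<^sup>2) \<partial>K (fst \<omega>, fst (snd \<omega>)) \<partial>U a)"
  proof -
    have "(\<integral>\<^sup>+z. ennreal ((fst z - snd z)\<^sup>2) \<partial>pi) = (\<integral>\<^sup>+\<omega>. \<integral>\<^sup>+z. ennreal ((fst z - snd z)\<^sup>2) \<partial>N \<omega> \<partial>U a)"
      unfolding pi_def by (rule nn_integral_bind[OF _ N_m]) measurable
    also have "\<dots> = (\<integral>\<^sup>+\<omega>. \<integral>\<^sup>+t. ennreal ((t - fstar (fst \<omega>, fst (snd \<omega>)))\<^sup>2) \<partial>K (fst \<omega>, fst (snd \<omega>)) \<partial>U a)"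
    proof (rule nn_integral_cong)
      fix \<omega> assume w: "\<omega> \<in> space (U a)"
      have m: "(\<lambda>t. (fp \<omega>, t)) \<in> Kp \<omega> \<rightarrow>\<^sub>M borel \<Otimes>\<^sub>M borel"
        using Kp_sets[OF w] by (simp add: measurable_cong_sets[of "Kp \<omega>" borel])
      have "(\<integral>\<^sup>+z. ennreal ((fst z - snd z)\<^sup>2) \<partial>N \<omega>) = (\<integral>\<^sup>+t. ennreal ((fp \<omega> - t)\<^sup>2) \<partial>Kp \<omega>)"
        unfolding N_def by (subst nn_integral_distr[OF m]) auto
      then show "(\<integral>\<^sup>+z. ennreal ((fst z - snd z)\<^sup>2) \<partial>N \<omega>)
          = (\<integral>\<^sup>+t. ennreal ((t - fstar (fst \<omega>, fst (snd \<omega>)))\<^sup>2) \<partial>K (fst \<omega>, fst (snd \<omega>)))"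
        by (simp add: Kp_def fp_def power2_commute)
    qed
    finally show ?thesis .
  qed
  show ?thesis unfolding W2sq_def cost[symmetric] using cpl by (rule INF_lower)
qed

lemma lower:
  assumes K: "K \<in> KS"
  shows "(\<Sum>a\<in>UNIV. ennreal (grp_weight mu a) * W2sq (cond_bayes_dist mu fstar a) (cond_out_dist mu K a))
       \<le> excess_risk mu fstar K"
  unfolding excess_risk_def decomp[OF excess_risk_meas[OF K]]
  by (intro sum_mono mult_left_mono lower_one[OF K]) auto

end


context setting
begin

lemma AE_U_grp: "AE \<omega> in U a. fst (snd \<omega>) = a"
  unfolding U_def by (rule AE_uniform_measureI[OF G_sets]) (auto simp: grp_event_def)

lemma upper_K:
  fixes Q :: "'a \<Rightarrow> real measure" and pis :: "'a \<Rightarrow> (real \<times> real) measure" and e :: real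
  assumes Q: "\<And>a. Q a \<in> prob_measures_R"
    and pis: "\<And>a. pis a \<in> couplings (cond_bayes_dist mu fstar a) (Q a)"
    and e: "e > 0"
  shows "\<exists>K\<in>KS. (\<forall>a. cond_out_dist mu K a = Q a) \<and>
           excess_risk mu fstar K \<le> (\<Sum>a\<in>UNIV. ennreal (grp_weight mu a) *
              (ennreal (1 + e) * (\<integral>\<^sup>+z. ennreal ((fst z - snd z)\<^sup>2) \<partial>pis a) + ennreal (e + e\<^sup>2)))"
proof -
  have cplA: "cpl (pis a)" for a
    using pis[of a] unfolding couplings_def by (auto intro!: cpl.intro cpl_axioms.intro)
  have rA: "cpl.r (pis a) = cond_bayes_dist mu fstar a" for a
    using pis[of a] unfolding couplings_def cpl.r_def[OF cplA] by auto
  have sndA: "distr (pis a) borel snd = Q a" for a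
    using pis[of a] unfolding couplings_def by auto
  define K where "K z = condK (pis (snd z)) e (cellJ e (fstar z))" for z :: "'x \<times> 'a"
  have KS: "K \<in> KS"
    unfolding KS_def K_def
  proof (rule measurable_compose_countable'[where f="\<lambda>a z. condK (pis a) e (cellJ e (fstar z))" and g=snd and I=UNIV])
    fix a :: 'a
    show "(\<lambda>z. condK (pis a) e (cellJ e (fstar z))) \<in> MX \<Otimes>\<^sub>M count_space UNIV \<rightarrow>\<^sub>M prob_algebra borel"
      by (rule measurable_compose[OF fmeas cpl.condK_meas[OF cplA]])
  qed (auto simp: countable_finite)
  define fp where "fp \<omega> = fstar (fst \<omega>, fst (snd \<omega>))" for \<omega> :: "'x \<times> 'a \<times> real"
  have fp_m[measurable]: "fp \<in> borel_measurable (U a)" for a unfolding fp_def by measurable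
  have ne: "space (U a) \<noteq> {}" for a using prob_space.not_empty[OF U_prob] .
  have Kp_s: "(\<lambda>\<omega>. K (fst \<omega>, fst (snd \<omega>))) \<in> U a \<rightarrow>\<^sub>M subprob_algebra borel" for a
    using Kp_meas[OF KS] by (intro measurable_prob_algebraD) (simp add: measurable_cong_sets[OF sets_U refl])
  have AEK: "AE \<omega> in U a. K (fst \<omega>, fst (snd \<omega>)) = condK (pis a) e (cellJ e (fp \<omega>))" for a
    using AE_U_grp[of a] by eventually_elim (simp add: K_def fp_def)
  have cK_s: "(\<lambda>t. condK (pis a) e (cellJ e t)) \<in> borel \<rightarrow>\<^sub>M subprob_algebra borel" for a
    by (rule measurable_prob_algebraD[OF cpl.condK_meas[OF cplA]])
  have out: "cond_out_dist mu K a = Q a" for a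
  proof (rule measure_eqI)
    show "sets (cond_out_dist mu K a) = sets (Q a)"
      using cond_out_prob[OF KS, of a] Q[of a] by (simp add: prob_measures_R_def)
    fix B assume "B \<in> sets (cond_out_dist mu K a)"
    then have B[measurable]: "B \<in> sets borel"
      using cond_out_prob[OF KS, of a] by (simp add: prob_measures_R_def)
    have "emeasure (cond_out_dist mu K a) B = (\<integral>\<^sup>+\<omega>. emeasure (K (fst \<omega>, fst (snd \<omega>))) B \<partial>U a)"
      unfolding cond_out_U by (rule emeasure_bind[OF ne Kp_s B])
    also have "\<dots> = (\<integral>\<^sup>+\<omega>. emeasure (condK (pis a) e (cellJ e (fp \<omega>))) B \<partial>U a)"
      by (rule nn_integral_cong_AE) (use AEK[of a] in eventually_elim, simp)
    also have "\<dots> = (\<integral>\<^sup>+t. emeasure (condK (pis a) e (cellJ e t)) B \<partial>distr (U a) borel fp)"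
    proof (rule nn_integral_distr[symmetric])
      show "fp \<in> U a \<rightarrow>\<^sub>M borel" by simp
      show "(\<lambda>t. emeasure (condK (pis a) e (cellJ e t)) B) \<in> borel_measurable (distr (U a) borel fp)"
        using measurable_compose[OF cK_s measurable_emeasure_subprob_algebra[OF B]] by simp
    qed
    also have "distr (U a) borel fp = cpl.r (pis a)"
      by (simp add: rA cond_bayes_U fp_def[abs_def])
    also have "(\<integral>\<^sup>+t. emeasure (condK (pis a) e (cellJ e t)) B \<partial>cpl.r (pis a)) = emeasure (Q a) B"
      using cpl.condK_snd[OF cplA B] sndA by simp
    finally show "emeasure (cond_out_dist mu K a) B = emeasure (Q a) B" .
  qed
  have risk: "excess_risk mu fstar K \<le> (\<Sum>a\<in>UNIV. ennreal (grp_weight mu a) *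
              (ennreal (1 + e) * (\<integral>\<^sup>+z. ennreal ((fst z - snd z)\<^sup>2) \<partial>pis a) + ennreal (e + e\<^sup>2)))"
    unfolding excess_risk_def decomp[OF excess_risk_meas[OF KS]]
  proof (intro sum_mono mult_left_mono)
    fix a :: 'a
    have "(\<integral>\<^sup>+\<omega>. \<integral>\<^sup>+t. ennreal ((t - fstar (fst \<omega>, fst (snd \<omega>)))\<^sup>2) \<partial>K (fst \<omega>, fst (snd \<omega>)) \<partial>U a)
        = (\<integral>\<^sup>+\<omega>. \<integral>\<^sup>+s. ennreal ((s - fp \<omega>)\<^sup>2) \<partial>condK (pis a) e (cellJ e (fp \<omega>)) \<partial>U a)"
      by (rule nn_integral_cong_AE) (use AEK[of a] in eventually_elim, simp add: fp_def)
    also have "\<dots> = (\<integral>\<^sup>+t. \<integral>\<^sup>+s. ennreal ((s - t)\<^sup>2) \<partial>condK (pis a) e (cellJ e t) \<partial>distr (U a) borel fp)"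
    proof (rule nn_integral_distr[symmetric])
      show "fp \<in> U a \<rightarrow>\<^sub>M borel" by simp
      have "(\<lambda>t. \<integral>\<^sup>+s. ennreal ((s - t)\<^sup>2) \<partial>condK (pis a) e (cellJ e t)) \<in> borel_measurable borel"
        by (rule nn_integral_measurable_subprob_algebra2[OF _ cK_s]) measurable
      then show "(\<lambda>t. \<integral>\<^sup>+s. ennreal ((s - t)\<^sup>2) \<partial>condK (pis a) e (cellJ e t)) \<in> borel_measurable (distr (U a) borel fp)"
        by simp
    qed
    also have "distr (U a) borel fp = cpl.r (pis a)"
      by (simp add: rA cond_bayes_U fp_def[abs_def])
    also have "(\<integral>\<^sup>+t. \<integral>\<^sup>+s. ennreal ((s - t)\<^sup>2) \<partial>condK (pis a) e (cellJ e t) \<partial>cpl.r (pis a))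
        \<le> ennreal (1 + e) * (\<integral>\<^sup>+z. ennreal ((fst z - snd z)\<^sup>2) \<partial>pis a) + ennreal (e + e\<^sup>2)"
      by (rule cpl.condK_cost[OF cplA e])
    finally show "(\<integral>\<^sup>+\<omega>. \<integral>\<^sup>+t. ennreal ((t - fstar (fst \<omega>, fst (snd \<omega>)))\<^sup>2) \<partial>K (fst \<omega>, fst (snd \<omega>)) \<partial>U a)
        \<le> ennreal (1 + e) * (\<integral>\<^sup>+z. ennreal ((fst z - snd z)\<^sup>2) \<partial>pis a) + ennreal (e + e\<^sup>2)" .
  qed simp
  show ?thesis using KS out risk by blast
qed

end


lemma real_bound:
  fixes w c :: "'i \<Rightarrow> real" and d :: real
  assumes fin: "finite I" and w: "\<And>i. w i \<ge> 0" and c: "\<And>i. c i \<ge> 0" and d: "d > 0"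
  defines "T \<equiv> (\<Sum>i\<in>I. w i * (c i + 4))"
  defines "ep \<equiv> min 1 (d / (1 + T))"
  shows "ep > 0" and "(\<Sum>i\<in>I. w i * ((1 + ep) * (c i + ep) + (ep + ep\<^sup>2))) \<le> (\<Sum>i\<in>I. w i * c i) + d"
proof -
  have T0: "T \<ge> 0" unfolding T_def using w c by (intro sum_nonneg) simp
  show ep0: "ep > 0" unfolding ep_def using d T0 by simp
  have ep1: "ep \<le> 1" unfolding ep_def by simp
  have pt: "w i * ((1 + ep) * (c i + ep) + (ep + ep\<^sup>2)) \<le> w i * c i + ep * (w i * (c i + 4))" for i
  proof -
    have "(1 + ep) * (c i + ep) + (ep + ep\<^sup>2) = c i + ep * (c i + 2 + 2 * ep)"
      by (simp add: algebra_simps power2_eq_square)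
    also have "\<dots> \<le> c i + ep * (c i + 4)"
      using ep0 ep1 by (intro add_left_mono mult_left_mono) auto
    finally have "(1 + ep) * (c i + ep) + (ep + ep\<^sup>2) \<le> c i + ep * (c i + 4)" .
    then have "w i * ((1 + ep) * (c i + ep) + (ep + ep\<^sup>2)) \<le> w i * (c i + ep * (c i + 4))"
      using w[of i] by (rule mult_left_mono)
    then show ?thesis by (simp add: algebra_simps)
  qed
  have "(\<Sum>i\<in>I. w i * ((1 + ep) * (c i + ep) + (ep + ep\<^sup>2))) \<le> (\<Sum>i\<in>I. w i * c i + ep * (w i * (c i + 4)))"
    by (rule sum_mono) (rule pt)
  also have "\<dots> = (\<Sum>i\<in>I. w i * c i) + ep * T"
    by (simp add: sum.distrib sum_distrib_left T_def)
  also have "ep * T \<le> d"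
  proof -
    have "ep * T \<le> d / (1 + T) * T" using T0 unfolding ep_def by (intro mult_right_mono) auto
    also have "\<dots> \<le> d" using T0 d by (simp add: field_simps)
    finally show ?thesis .
  qed
  finally show "(\<Sum>i\<in>I. w i * ((1 + ep) * (c i + ep) + (ep + ep\<^sup>2))) \<le> (\<Sum>i\<in>I. w i * c i) + d"
    by simp
qed

lemma sp_gap_le:
  fixes mu :: "('x \<times> 'a::finite \<times> real) measure"
  assumes "\<And>a b. D_KS (cond_out_dist mu K a) (cond_out_dist mu K b) \<le> c"
  shows "sp_gap mu K \<le> c"
  unfolding sp_gap_def using assms by (subst Max_le_iff) auto

lemma sp_gap_ge:
  fixes mu :: "('x \<times> 'a::finite \<times> real) measure"
  shows "D_KS (cond_out_dist mu K a) (cond_out_dist mu K b) \<le> sp_gap mu K"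
  unfolding sp_gap_def by (rule Max_ge) (auto intro!: image_eqI[where x="(a, b)"])



theorem theorem1:
  fixes MX :: "'x measure"
    and mu :: "('x \<times> 'a::finite \<times> real) measure"
    and fstar :: "'x \<times> 'a \<Rightarrow> real"
    and alpha :: real
  assumes "prob_space mu"
    and "sets mu = sets (MX \<Otimes>\<^sub>M (count_space UNIV \<Otimes>\<^sub>M borel))"
    and "integrable mu (\<lambda>\<omega>. (snd (snd \<omega>))\<^sup>2)"
    and "\<forall>a. grp_weight mu a > 0"
    and "is_bayes_regressor MX mu fstar"
    and "alpha \<ge> 0"
  shows "(INF K \<in> {K \<in> MX \<Otimes>\<^sub>M count_space UNIV \<rightarrow>\<^sub>M prob_algebra borel. sp_gap mu K \<le> alpha}.
            excess_risk mu fstar K)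
       = (INF (q, Q) \<in> {(q, Q). q \<in> prob_measures_R \<and>
                               (\<forall>a. Q a \<in> prob_measures_R \<and> D_KS (Q a) q \<le> alpha / 2)}.
            (\<Sum>a\<in>UNIV. ennreal (grp_weight mu a) * W2sq (cond_bayes_dist mu fstar a) (Q a)))"
proof -
  interpret setting MX mu fstar
    using assms unfolding is_bayes_regressor_def by (intro setting.intro) auto
  define Feas where "Feas = {K \<in> MX \<Otimes>\<^sub>M count_space UNIV \<rightarrow>\<^sub>M prob_algebra borel. sp_gap mu K \<le> alpha}"
  define S where "S = {(q, Q :: 'a \<Rightarrow> real measure). q \<in> prob_measures_R \<and>
                               (\<forall>a. Q a \<in> prob_measures_R \<and> D_KS (Q a) q \<le> alpha / 2)}"
  define obj where "obj Q = (\<Sum>a\<in>UNIV. ennreal (grp_weight mu a) * W2sq (cond_bayes_dist mu fstar a) (Q a))"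
    for Q :: "'a \<Rightarrow> real measure"
  have R_eq: "(INF (q, Q) \<in> S. obj Q) = (INF x \<in> S. obj (snd x))"
    by (rule INF_cong) auto
  have ge: "(INF x \<in> S. obj (snd x)) \<le> (INF K \<in> Feas. excess_risk mu fstar K)"
  proof (rule INF_greatest)
    fix K assume K: "K \<in> Feas"
    then have KS: "K \<in> KS" by (simp add: Feas_def KS_def)
    define Q where "Q = cond_out_dist mu K"
    have Qp: "Q a \<in> prob_measures_R" for a unfolding Q_def by (rule cond_out_prob[OF KS])
    have gap: "D_KS (Q a) (Q b) \<le> alpha" for a b
      using sp_gap_ge[of mu K a b] K unfolding Q_def Feas_def by simp
    obtain q where q: "q \<in> prob_measures_R" "\<forall>a. D_KS (Q a) q \<le> alpha / 2"
      using midpoint_measure[of Q alpha] Qp gap by blast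
    have "(q, Q) \<in> S" using q Qp by (simp add: S_def)
    then have "(INF x \<in> S. obj (snd x)) \<le> obj Q" by (rule INF_lower2) simp
    also have "\<dots> \<le> excess_risk mu fstar K" unfolding obj_def Q_def by (rule lower[OF KS])
    finally show "(INF x \<in> S. obj (snd x)) \<le> excess_risk mu fstar K" .
  qed
  have le: "(INF K \<in> Feas. excess_risk mu fstar K) \<le> (INF x \<in> S. obj (snd x))"
  proof (rule INF_greatest)
    fix x assume "x \<in> S"
    then obtain q Q where x: "x = (q, Q)" and q: "q \<in> prob_measures_R"
      and Q: "\<And>a. Q a \<in> prob_measures_R" and QD: "\<And>a. D_KS (Q a) q \<le> alpha / 2"
      unfolding S_def by auto
    have qps: "prob_space q" using q by (simp add: prob_measures_R_def)
    have Qps: "prob_space (Q a)" for a using Q[of a] by (simp add: prob_measures_R_def)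
    show "(INF K \<in> Feas. excess_risk mu fstar K) \<le> obj (snd x)"
      unfolding x snd_conv
    proof (rule ennreal_le_epsilon)
      fix d :: real assume fin: "obj Q < top" and d: "0 < d"
      define W where "W a = W2sq (cond_bayes_dist mu fstar a) (Q a)" for a
      have Wfin: "W a < top" for a
      proof (rule ccontr)
        assume "\<not> W a < top"
        then have "W a = top" using top.not_eq_extremum by blast
        moreover have "ennreal (grp_weight mu a) * W a \<le> obj Q"
          unfolding obj_def W_def[symmetric] by (rule member_le_sum) auto
        moreover have "ennreal (grp_weight mu a) \<noteq> 0" using wpos[rule_format, of a] by simp
        ultimately show False using fin by (simp add: ennreal_mult_eq_top_iff top_unique)
      qed
      define c where "c a = enn2real (W a)" for a
      have Wc: "W a = ennreal (c a)" for a using Wfin[of a] unfolding c_def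
        by (cases "W a") auto
      have c0: "c a \<ge> 0" for a by (simp add: c_def)
      define T where "T = (\<Sum>a\<in>UNIV. grp_weight mu a * (c a + 4))"
      define ep where "ep = min 1 (d / (1 + T))"
      have ep0: "ep > 0" and rb: "(\<Sum>a\<in>UNIV. grp_weight mu a * ((1 + ep) * (c a + ep) + (ep + ep\<^sup>2)))
          \<le> (\<Sum>a\<in>UNIV. grp_weight mu a * c a) + d"
        using real_bound[of UNIV "grp_weight mu" c d] wpos c0 d
        unfolding ep_def T_def by (auto simp: less_imp_le)
      have "\<exists>pi. pi \<in> couplings (cond_bayes_dist mu fstar a) (Q a) \<and>
                 (\<integral>\<^sup>+z. ennreal ((fst z - snd z)\<^sup>2) \<partial>pi) < W a + ennreal ep" for a
      proof -
        have "W a < W a + ennreal ep" using Wc[of a] ep0 by (simp flip: ennreal_plus)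
        then show ?thesis unfolding W_def W2sq_def by (simp add: INF_less_iff Bex_def)
      qed
      then obtain pis where pis: "\<And>a. pis a \<in> couplings (cond_bayes_dist mu fstar a) (Q a)"
        and pc: "\<And>a. (\<integral>\<^sup>+z. ennreal ((fst z - snd z)\<^sup>2) \<partial>pis a) < W a + ennreal ep"
        by metis
      obtain K where KS: "K \<in> KS" and out: "\<forall>a. cond_out_dist mu K a = Q a"
        and risk: "excess_risk mu fstar K \<le> (\<Sum>a\<in>UNIV. ennreal (grp_weight mu a) *
              (ennreal (1 + ep) * (\<integral>\<^sup>+z. ennreal ((fst z - snd z)\<^sup>2) \<partial>pis a) + ennreal (ep + ep\<^sup>2)))"
        using upper_K[OF Q pis ep0] by blast
      have feas: "K \<in> Feas"
      proof -
        have "D_KS (cond_out_dist mu K a) (cond_out_dist mu K b) \<le> alpha" for a b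
        proof -
          have "D_KS (Q a) (Q b) \<le> D_KS (Q a) q + D_KS q (Q b)"
            by (rule D_KS_triangle[OF Qps qps Qps])
          also have "\<dots> \<le> alpha / 2 + alpha / 2"
            using QD[of a] QD[of b] by (simp add: D_KS_sym[of q])
          finally show ?thesis using out by simp
        qed
        then have "sp_gap mu K \<le> alpha" by (rule sp_gap_le)
        then show ?thesis using KS by (simp add: Feas_def KS_def)
      qed
      have "(INF K \<in> Feas. excess_risk mu fstar K) \<le> excess_risk mu fstar K"
        using feas by (rule INF_lower)
      also have "\<dots> \<le> (\<Sum>a\<in>UNIV. ennreal (grp_weight mu a) *
              (ennreal (1 + ep) * ennreal (c a + ep) + ennreal (ep + ep\<^sup>2)))"
        using risk
      proof (rule order_trans)
        show "(\<Sum>a\<in>UNIV. ennreal (grp_weight mu a) *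
              (ennreal (1 + ep) * (\<integral>\<^sup>+z. ennreal ((fst z - snd z)\<^sup>2) \<partial>pis a) + ennreal (ep + ep\<^sup>2)))
            \<le> (\<Sum>a\<in>UNIV. ennreal (grp_weight mu a) *
              (ennreal (1 + ep) * ennreal (c a + ep) + ennreal (ep + ep\<^sup>2)))"
        proof (intro sum_mono mult_left_mono add_right_mono)
          fix a
          have "(\<integral>\<^sup>+z. ennreal ((fst z - snd z)\<^sup>2) \<partial>pis a) \<le> ennreal (c a + ep)"
            using pc[of a] Wc[of a] c0[of a] ep0 by (simp add: less_imp_le)
          then show "(\<integral>\<^sup>+z. ennreal ((fst z - snd z)\<^sup>2) \<partial>pis a) \<le> ennreal (c a + ep)" .
        qed auto
      qed
      also have "\<dots> = ennreal (\<Sum>a\<in>UNIV. grp_weight mu a * ((1 + ep) * (c a + ep) + (ep + ep\<^sup>2)))"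
      proof -
        have nn: "0 \<le> grp_weight mu a" "0 \<le> ep" "0 \<le> 1 + ep" "0 \<le> c a + ep" "0 \<le> ep + ep\<^sup>2"
           "0 \<le> (1 + ep) * (c a + ep)" "0 \<le> (1 + ep) * (c a + ep) + (ep + ep\<^sup>2)" for a
          using wpos[rule_format, of a] c0[of a] ep0 by auto
        have per: "ennreal (grp_weight mu a) * (ennreal (1 + ep) * ennreal (c a + ep) + ennreal (ep + ep\<^sup>2))
            = ennreal (grp_weight mu a * ((1 + ep) * (c a + ep) + (ep + ep\<^sup>2)))" for a
        proof -
          have e1: "ennreal (grp_weight mu a * ((1 + ep) * (c a + ep) + (ep + ep\<^sup>2)))
              = ennreal (grp_weight mu a) * ennreal ((1 + ep) * (c a + ep) + (ep + ep\<^sup>2))"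
            by (rule ennreal_mult) (rule nn)+
          have e2: "ennreal ((1 + ep) * (c a + ep) + (ep + ep\<^sup>2)) = ennreal ((1 + ep) * (c a + ep)) + ennreal (ep + ep\<^sup>2)"
            by (rule ennreal_plus) (rule nn)+
          have e3: "ennreal ((1 + ep) * (c a + ep)) = ennreal (1 + ep) * ennreal (c a + ep)"
            by (rule ennreal_mult) (rule nn)+
          show ?thesis by (simp only: e1 e2 e3)
        qed
        have "(\<Sum>a\<in>UNIV. ennreal (grp_weight mu a) * (ennreal (1 + ep) * ennreal (c a + ep) + ennreal (ep + ep\<^sup>2)))
            = (\<Sum>a\<in>UNIV. ennreal (grp_weight mu a * ((1 + ep) * (c a + ep) + (ep + ep\<^sup>2))))"
          by (rule sum.cong[OF refl]) (rule per)
        also have "\<dots> = ennreal (\<Sum>a\<in>UNIV. grp_weight mu a * ((1 + ep) * (c a + ep) + (ep + ep\<^sup>2)))"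
          by (rule sum_ennreal) (intro mult_nonneg_nonneg nn)
        finally show ?thesis .
      qed
      also have "\<dots> \<le> ennreal ((\<Sum>a\<in>UNIV. grp_weight mu a * c a) + d)"
        by (rule ennreal_leI[OF rb])
      also have "\<dots> = obj Q + ennreal d"
      proof -
        have nn: "0 \<le> grp_weight mu a * c a" for a
          using wpos[rule_format, of a] c0[of a] by simp
        have "obj Q = (\<Sum>a\<in>UNIV. ennreal (grp_weight mu a * c a))"
          unfolding obj_def W_def[symmetric] Wc
          using wpos c0 by (intro sum.cong[OF refl] ennreal_mult[symmetric]) (auto simp: less_imp_le)
        also have "\<dots> = ennreal (\<Sum>a\<in>UNIV. grp_weight mu a * c a)"
          by (rule sum_ennreal) (rule nn)
        finally have "obj Q = ennreal (\<Sum>a\<in>UNIV. grp_weight mu a * c a)" .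
        moreover have "0 \<le> (\<Sum>a\<in>UNIV. grp_weight mu a * c a)" by (rule sum_nonneg) (rule nn)
        ultimately show ?thesis using d by (simp add: ennreal_plus)
      qed
      finally show "(INF K \<in> Feas. excess_risk mu fstar K) \<le> obj Q + ennreal d" .
    qed
  qed
  show ?thesis
    using ge le unfolding Feas_def[symmetric] S_def[symmetric] obj_def[symmetric] R_eq
    by (rule antisym[rotated])
qed


end
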